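(* Let $0<a,b<1$, $f\ge3$, and let $w^*_n,q^*_n,\overline w_{m,n},\overline q_n$ be as in the context. Define $[w^*(a),q^*(a)]_n:=w^*_n(a)q^*_{n+1}(a)-q^*_n(a)w^*_{n+1}(a)$ and $[\overline w,\overline q]_n:=\overline w_{n,0}\overline q_{n+1}-\overline q_n\overline w_{n+1,0}$ for $n\ge1$. Then: 1. $[w^*(a),q^*(a)]_n=a^2z^2x_a^{\,n-1}$ for all $n\ge1$; 2. $[\overline w,\overline q]_{f-1}=\frac{1-b}{1-a}[w^*(a),q^*(a)]_{f-1}=\frac{1-b}{1-a}a^2z^2x_a^{\,f-2}$; 3. $[\overline w,\overline q]_{f+j-1}=\frac{1-b}{1-a}a^2z^2x_a^{\,f-2}x(a,b)x_b^{\,j-1}$ for all $j\ge1$.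
   Context: Let $r,y,z$ be indeterminates. For $c\in(0,1)$: $\omega_c:=1-(1-c)^2r^2y^2z^2$, $\tau_c:=1+(1-c)^2r^2z^2y(1-y)$, $x_c:=c^2z^2\tau_c^2$, $\beta_c:=1+z^2(c^2-(1-c)^2r^2(y^2+c^2(1-y)^2z^2))$; $w^*_0(c):=(\beta_c-\omega_c)/x_c$, $w^*_1(c):=1$, $w^*_{n+1}(c):=\beta_cw^*_n(c)-x_cw^*_{n-1}(c)$ ($n\ge1$); $q^*_0(c):=-(1-y)(1+y+(1-c)^2r^2y^2z^2(1-y))/\tau_c^2$, $q^*_1(c):=y^2$, $q^*_{n+1}(c):=\beta_cq^*_n(c)-x_cq^*_{n-1}(c)$ ($n\ge1$). Also $\tau(a,b):=1+(1-a)(1-b)r^2z^2y(1-y)$, $x(a,b):=b^2z^2\tau(a,b)^2$, $x(b,a):=a^2z^2\tau(a,b)^2$, $\beta(a,b):=\beta_b-(b-a)b^2(1-b)r^2(1-y)^2z^4$, $\beta(b,a):=\beta_a-(a-b)a^2(1-a)r^2(1-y)^2z^4$. Downward array $\overline w_{n,m}$ ($0\le m<n$): $\overline w_{m+1,m}:=1$; for $n-m\ge2$: $\overline w_{m+\ell,m}:=w^*_\ell(a)$ if $m+\ell\le f-1$, $:=w^*_\ell(b)$ if $f-1\le m$; $\overline w_{f+j,f-2}:=\frac{1-a}{1-b}w^*_{j+2}(b)+\frac{a-b}{1-b}w^*_{j+1}(b)$ ($j\ge0$); $\overline w_{n,f-3}:=\beta(b,a)\overline w_{n,f-2}-x(b,a)\overline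 w_{n,f-1}$ ($n\ge f$); $\overline w_{n,f-\ell-2}:=\beta_a\overline w_{n,f-\ell-1}-x_a\overline w_{n,f-\ell}$ ($n\ge f$, $\ell\ge2$). The sequence $\overline q_n$, $n\ge1$: $\overline q_n:=q^*_n(a)$ for $1\le n<f$; $\overline q_f:=\frac{1-b}{1-a}q^*_f(a)+\frac{b-a}{1-a}q^*_{f-1}(a)$; $\overline q_{f+1}:=\beta(a,b)\overline q_f-x(a,b)\overline q_{f-1}$; $\overline q_{f+j+1}:=\beta_b\overline q_{f+j}-x_b\overline q_{f+j-1}$ for $j\ge1$. *)

theory Defs
  imports Main "HOL.Real"
begin

text \<open>The indeterminates r, y, z are modelled as real parameters.\<close>

definition omega_c :: "real \<Rightarrow> real \<Rightarrow> real \<Rightarrow> real \<Rightarrow> real" where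
  "omega_c r y z c = 1 - (1-c)^2 * r^2 * y^2 * z^2"

definition tau_c :: "real \<Rightarrow> real \<Rightarrow> real \<Rightarrow> real \<Rightarrow> real" where
  "tau_c r y z c = 1 + (1-c)^2 * r^2 * z^2 * y * (1-y)"

definition x_c :: "real \<Rightarrow> real \<Rightarrow> real \<Rightarrow> real \<Rightarrow> real" where
  "x_c r y z c = c^2 * z^2 * (tau_c r y z c)^2"

definition beta_c :: "real \<Rightarrow> real \<Rightarrow> real \<Rightarrow> real \<Rightarrow> real" where
  "beta_c r y z c = 1 + z^2 * (c^2 - (1-c)^2 * r^2 * (y^2 + c^2 * (1-y)^2 * z^2))"

fun wstar :: "real \<Rightarrow> real \<Rightarrow> real \<Rightarrow> real \<Rightarrow> nat \<Rightarrow> real" where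
  "wstar r y z c 0 = (beta_c r y z c - omega_c r y z c) / x_c r y z c"
| "wstar r y z c (Suc 0) = 1"
| "wstar r y z c (Suc (Suc n)) =
     beta_c r y z c * wstar r y z c (Suc n) - x_c r y z c * wstar r y z c n"

fun qstar :: "real \<Rightarrow> real \<Rightarrow> real \<Rightarrow> real \<Rightarrow> nat \<Rightarrow> real" where
  "qstar r y z c 0 = - (1-y) * (1 + y + (1-c)^2 * r^2 * y^2 * z^2 * (1-y)) / (tau_c r y z c)^2"
| "qstar r y z c (Suc 0) = y^2"
| "qstar r y z c (Suc (Suc n)) =
     beta_c r y z c * qstar r y z c (Suc n) - x_c r y z c * qstar r y z c n"

definition tau_ab :: "real \<Rightarrow> real \<Rightarrow> real \<Rightarrow> real \<Rightarrow> real \<Rightarrow> real" where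
  "tau_ab r y z a b = 1 + (1-a) * (1-b) * r^2 * z^2 * y * (1-y)"

text \<open>xab r y z a b = x(a,b) = b^2 z^2 tau(a,b)^2 ; x(b,a) = a^2 z^2 tau(a,b)^2 = xab r y z b a
  (tau is symmetric).\<close>
definition xab :: "real \<Rightarrow> real \<Rightarrow> real \<Rightarrow> real \<Rightarrow> real \<Rightarrow> real" where
  "xab r y z a b = b^2 * z^2 * (tau_ab r y z a b)^2"

definition betaab :: "real \<Rightarrow> real \<Rightarrow> real \<Rightarrow> real \<Rightarrow> real \<Rightarrow> real" where
  "betaab r y z a b = beta_c r y z b - (b-a) * b^2 * (1-b) * r^2 * (1-y)^2 * z^4"

text \<open>Lower part of the downward array: wlow r y z a b f n k = wbar_{n, f-2-k} for n >= f.\<close>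
fun wlow :: "real \<Rightarrow> real \<Rightarrow> real \<Rightarrow> real \<Rightarrow> real \<Rightarrow> nat \<Rightarrow> nat \<Rightarrow> nat \<Rightarrow> real" where
  "wlow r y z a b f n 0 =
     (1-a)/(1-b) * wstar r y z b (n - f + 2) + (a-b)/(1-b) * wstar r y z b (n - f + 1)"
| "wlow r y z a b f n (Suc 0) =
     betaab r y z b a * wlow r y z a b f n 0 - xab r y z b a * wstar r y z b (n - f + 1)"
| "wlow r y z a b f n (Suc (Suc k)) =
     beta_c r y z a * wlow r y z a b f n (Suc k) - x_c r y z a * wlow r y z a b f n k"

text \<open>Downward array wbar_{n,m} (meaningful for 0 <= m < n).\<close>
definition wbar :: "real \<Rightarrow> real \<Rightarrow> real \<Rightarrow> real \<Rightarrow> real \<Rightarrow> nat \<Rightarrow> nat \<Rightarrow> nat \<Rightarrow> real" where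
  "wbar r y z a b f n m =
     (if n = m + 1 then 1
      else if n \<le> f - 1 then wstar r y z a (n - m)
      else if f - 1 \<le> m then wstar r y z b (n - m)
      else wlow r y z a b f n (f - 2 - m))"

text \<open>qhigh r y z a b f j = qbar_{f-1+j}.\<close>
fun qhigh :: "real \<Rightarrow> real \<Rightarrow> real \<Rightarrow> real \<Rightarrow> real \<Rightarrow> nat \<Rightarrow> nat \<Rightarrow> real" where
  "qhigh r y z a b f 0 = qstar r y z a (f - 1)"
| "qhigh r y z a b f (Suc 0) =
     (1-b)/(1-a) * qstar r y z a f + (b-a)/(1-a) * qstar r y z a (f - 1)"
| "qhigh r y z a b f (Suc (Suc 0)) =
     betaab r y z a b * qhigh r y z a b f (Suc 0) - xab r y z a b * qhigh r y z a b f 0"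
| "qhigh r y z a b f (Suc (Suc (Suc j))) =
     beta_c r y z b * qhigh r y z a b f (Suc (Suc j)) - x_c r y z b * qhigh r y z a b f (Suc j)"

definition qbar :: "real \<Rightarrow> real \<Rightarrow> real \<Rightarrow> real \<Rightarrow> real \<Rightarrow> nat \<Rightarrow> nat \<Rightarrow> real" where
  "qbar r y z a b f n = (if n < f then qstar r y z a n else qhigh r y z a b f (n - f + 1))"

definition brstar :: "real \<Rightarrow> real \<Rightarrow> real \<Rightarrow> real \<Rightarrow> nat \<Rightarrow> real" where
  "brstar r y z a n = wstar r y z a n * qstar r y z a (n+1) - qstar r y z a n * wstar r y z a (n+1)"

definition brbar :: "real \<Rightarrow> real \<Rightarrow> real \<Rightarrow> real \<Rightarrow> real \<Rightarrow> nat \<Rightarrow> nat \<Rightarrow> real" where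
  "brbar r y z a b f n = wbar r y z a b f n 0 * qbar r y z a b f (n+1)
                         - qbar r y z a b f n * wbar r y z a b f (n+1) 0"

end

theory Submission
  imports Defs
begin

lemma w2: "x_c r y z c \<noteq> 0 \<Longrightarrow> wstar r y z c 2 = omega_c r y z c"
  by (simp add: numeral_2_eq_2)

lemma T0:
  assumes "a \<noteq> 1" "b \<noteq> 1" "x_c r y z a \<noteq> 0" "x_c r y z b \<noteq> 0"
  shows "(1-a)/(1-b) * wstar r y z b 2 + (a-b)/(1-b) * wstar r y z b 1
     = ((1-b)*wstar r y z a 2 + (b-a)*wstar r y z a 1)/(1-a)"
proof -
  have a: "1 - a \<noteq> 0" "1 - b \<noteq> 0" using assms by auto
  have e: "wstar r y z a 2 = omega_c r y z a" "wstar r y z b 2 = omega_c r y z b"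
    using assms w2 by auto
  show ?thesis unfolding e omega_c_def using a
    by (simp add: divide_simps) algebra
qed

lemma T1:
  assumes "a \<noteq> 1" "b \<noteq> 1"
  shows "betaab r y z b a * ((1-a)/(1-b)*omega_c r y z b + (a-b)/(1-b)) - xab r y z b a
     = ((1-b)*(beta_c r y z a * omega_c r y z a - x_c r y z a) + (b-a)*omega_c r y z a)/(1-a)"
proof -
  have a: "1 - a \<noteq> 0" "1 - b \<noteq> 0" using assms by auto
  show ?thesis unfolding omega_c_def betaab_def xab_def x_c_def beta_c_def tau_ab_def tau_c_def using a
    by (simp add: divide_simps) algebra
qed

lemma S0:
  assumes "a \<noteq> 1" "b \<noteq> 1"
  shows "(1-a)/(1-b)*(beta_c r y z b * omega_c r y z b - x_c r y z b) + (a-b)/(1-b)*omega_c r y z b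
     = betaab r y z a b * ((1-a)/(1-b)*omega_c r y z b + (a-b)/(1-b)) - xab r y z a b"
proof -
  have a: "1 - a \<noteq> 0" "1 - b \<noteq> 0" using assms by auto
  show ?thesis unfolding omega_c_def betaab_def xab_def x_c_def beta_c_def tau_ab_def tau_c_def using a
    by (simp add: divide_simps) algebra
qed

lemma S1:
  assumes "a \<noteq> 1" "b \<noteq> 1"
  shows "betaab r y z b a * ((1-a)/(1-b)*(beta_c r y z b * omega_c r y z b - x_c r y z b) + (a-b)/(1-b)*omega_c r y z b) - xab r y z b a * omega_c r y z b
     = betaab r y z a b * (((1-b)*(beta_c r y z a * omega_c r y z a - x_c r y z a) + (b-a)*omega_c r y z a)/(1-a)) - xab r y z a b * omega_c r y z a"
proof -
  have a: "1 - a \<noteq> 0" "1 - b \<noteq> 0" using assms by auto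
  show ?thesis unfolding omega_c_def betaab_def xab_def x_c_def beta_c_def tau_ab_def tau_c_def using a
    by (simp add: divide_simps) algebra
qed


lemma brstar0:
  assumes "x_c r y z a \<noteq> 0" "tau_c r y z a \<noteq> 0"
  shows "brstar r y z a 0 * x_c r y z a = a^2 * z^2"
proof -
  have t: "tau_c r y z a \<noteq> 0" using assms by auto
  have w0: "wstar r y z a 0 * x_c r y z a = beta_c r y z a - omega_c r y z a" using assms by simp
  have "brstar r y z a 0 * x_c r y z a = (wstar r y z a 0 * x_c r y z a) * y^2
     - qstar r y z a 0 * x_c r y z a"
    by (simp add: brstar_def algebra_simps)
  also have "\<dots> = (beta_c r y z a - omega_c r y z a) * y^2
     - qstar r y z a 0 * x_c r y z a" unfolding w0 ..
  also have "\<dots> = a^2 * z^2"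
    unfolding omega_c_def x_c_def beta_c_def qstar.simps using t
    by (simp add: divide_simps) algebra
  finally show ?thesis .
qed

lemma brstar_Suc: "brstar r y z a (Suc n) = x_c r y z a * brstar r y z a n"
  by (simp add: brstar_def algebra_simps)

lemma brstar_pow:
  assumes "x_c r y z a \<noteq> 0" "tau_c r y z a \<noteq> 0" "n \<ge> 1"
  shows "brstar r y z a n = a^2 * z^2 * (x_c r y z a)^(n-1)"
proof -
  have "brstar r y z a (Suc m) = a^2 * z^2 * (x_c r y z a)^m" for m
  proof (induction m)
    case 0 then show ?case using brstar0[OF assms(1,2)] by (simp add: brstar_Suc algebra_simps)
  next
    case (Suc m) then show ?case by (simp add: brstar_Suc[of r y z a "Suc m"] algebra_simps)
  qed
  moreover obtain m where "n = Suc m" using assms(3) by (cases n) auto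
  ultimately show ?thesis by simp
qed

lemma lin: "(B::real) * ((p*u3 + q*u2)/c) - X * ((p*u2+q*u1)/c) = (p*(B*u3 - X*u2) + q*(B*u2 - X*u1))/c"
  by (simp add: divide_inverse algebra_simps)

lemma wlow_f:
  assumes "a \<noteq> 1" "b \<noteq> 1" "x_c r y z a \<noteq> 0" "x_c r y z b \<noteq> 0"
  shows "wlow r y z a b f f k = ((1-b)*wstar r y z a (Suc (Suc k)) + (b-a)*wstar r y z a (Suc k))/(1-a)"
proof -
  let ?P = "\<lambda>k. wlow r y z a b f f k = ((1-b)*wstar r y z a (Suc (Suc k)) + (b-a)*wstar r y z a (Suc k))/(1-a)"
  have a1: "1 - a \<noteq> 0" using assms by auto
  have b2: "wstar r y z b 2 = omega_c r y z b" "wstar r y z a 2 = omega_c r y z a"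
    using assms w2 by auto
  have a3: "wstar r y z a (Suc (Suc (Suc 0))) = beta_c r y z a * omega_c r y z a - x_c r y z a"
    using assms(3) by simp
  have b2': "wstar r y z b (Suc (Suc 0)) = omega_c r y z b" "wstar r y z a (Suc (Suc 0)) = omega_c r y z a"
    using assms by auto
  have l0: "wlow r y z a b f f 0 = (1-a)/(1-b) * omega_c r y z b + (a-b)/(1-b)"
    using b2 b2' by (simp add: numeral_2_eq_2)
  have p0: "?P 0"
    unfolding l0 b2' using T0[OF assms] unfolding b2 by simp
  have p1: "?P 1"
  proof -
    from l0 have "wlow r y z a b f f 1 = betaab r y z b a * ((1-a)/(1-b)*omega_c r y z b + (a-b)/(1-b)) - xab r y z b a"
      by (simp del: wlow.simps(1) add: wlow.simps(2)[of r y z a b f f, simplified One_nat_def[symmetric]])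
    also have "\<dots> = ((1-b)*(beta_c r y z a * omega_c r y z a - x_c r y z a) + (b-a)*omega_c r y z a)/(1-a)"
      using T1 assms by blast
    finally show ?thesis using a3 b2 by (simp add: numeral_2_eq_2)
  qed
  have "?P k \<and> ?P (Suc k)" for k
  proof (induction k)
    case 0 then show ?case using p0 p1 by simp
  next
    case (Suc k)
    then have h: "?P k" "?P (Suc k)" by auto
    have "wlow r y z a b f f (Suc (Suc k)) = beta_c r y z a * wlow r y z a b f f (Suc k) - x_c r y z a * wlow r y z a b f f k"
      by simp
    also have "\<dots> = ((1-b)*wstar r y z a (Suc (Suc (Suc (Suc k)))) + (b-a)*wstar r y z a (Suc (Suc (Suc k))))/(1-a)"
      unfolding h by (simp add: divide_inverse algebra_simps)
    finally show ?case using h by simp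
  qed
  then show ?thesis by simp
qed


lemma wl0: "wlow r y z a b f (f+m) 0 = (1-a)/(1-b) * wstar r y z b (Suc (Suc m)) + (a-b)/(1-b) * wstar r y z b (Suc m)"
  by simp

lemma wl1: "wlow r y z a b f (f+m) (Suc 0) = betaab r y z b a * wlow r y z a b f (f+m) 0 - xab r y z b a * wstar r y z b (Suc m)"
  by (simp only: wlow.simps(2)) simp

lemma wlow_f1:
  assumes "a \<noteq> 1" "b \<noteq> 1" "x_c r y z a \<noteq> 0" "x_c r y z b \<noteq> 0"
  shows "wlow r y z a b f (Suc f) k = betaab r y z a b * wlow r y z a b f f k - xab r y z a b * wstar r y z a (Suc k)"
proof -
  let ?P = "\<lambda>k. wlow r y z a b f (Suc f) k = betaab r y z a b * wlow r y z a b f f k - xab r y z a b * wstar r y z a (Suc k)"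
  have b2': "wstar r y z b (Suc (Suc 0)) = omega_c r y z b" "wstar r y z a (Suc (Suc 0)) = omega_c r y z a"
    using assms by auto
  have b3': "wstar r y z b (Suc (Suc (Suc 0))) = beta_c r y z b * omega_c r y z b - x_c r y z b"
     "wstar r y z a (Suc (Suc (Suc 0))) = beta_c r y z a * omega_c r y z a - x_c r y z a"
    using assms by auto
  have l0: "wlow r y z a b f f 0 = (1-a)/(1-b) * omega_c r y z b + (a-b)/(1-b)"
    using wl0[of r y z a b f 0] b2' by simp
  have l1: "wlow r y z a b f f (Suc 0) = ((1-b)*(beta_c r y z a * omega_c r y z a - x_c r y z a) + (b-a)*omega_c r y z a)/(1-a)"
    using wlow_f[OF assms, of f 1] b2' b3' by simp
  have m0: "wlow r y z a b f (Suc f) 0 = (1-a)/(1-b)*(beta_c r y z b * omega_c r y z b - x_c r y z b) + (a-b)/(1-b)*omega_c r y z b"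
    using wl0[of r y z a b f 1] b2' b3' by simp
  have m1: "wlow r y z a b f (Suc f) (Suc 0) = betaab r y z b a * ((1-a)/(1-b)*(beta_c r y z b * omega_c r y z b - x_c r y z b) + (a-b)/(1-b)*omega_c r y z b) - xab r y z b a * omega_c r y z b"
    using wl1[of r y z a b f 1] m0 b2' by simp
  have p0: "?P 0" unfolding m0 l0 using S0[OF assms(1,2)] by simp
  have p1: "?P 1" unfolding One_nat_def m1 l1 b2' using S1[OF assms(1,2)] by simp
  have "?P k \<and> ?P (Suc k)" for k
  proof (induction k)
    case 0 then show ?case using p0 p1 by simp
  next
    case (Suc k)
    then have h: "?P k" "?P (Suc k)" by auto
    have "wlow r y z a b f (Suc f) (Suc (Suc k)) = beta_c r y z a * wlow r y z a b f (Suc f) (Suc k) - x_c r y z a * wlow r y z a b f (Suc f) k"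
      by simp
    also have "\<dots> = betaab r y z a b * wlow r y z a b f f (Suc (Suc k)) - xab r y z a b * wstar r y z a (Suc (Suc (Suc k)))"
      unfolding h by (simp add: algebra_simps)
    finally show ?case using h by simp
  qed
  then show ?thesis by simp
qed

lemma wlow_recn:
  "wlow r y z a b f (f + Suc (Suc m)) k = beta_c r y z b * wlow r y z a b f (f + Suc m) k - x_c r y z b * wlow r y z a b f (f+m) k"
proof -
  let ?P = "\<lambda>k. wlow r y z a b f (f + Suc (Suc m)) k = beta_c r y z b * wlow r y z a b f (f + Suc m) k - x_c r y z b * wlow r y z a b f (f+m) k"
  have p0: "?P 0" unfolding wl0 by (simp add: divide_inverse algebra_simps)
  have p1: "?P 1" unfolding One_nat_def wl1 wl0 by (simp add: divide_inverse algebra_simps)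
  have "?P k \<and> ?P (Suc k)" for k
  proof (induction k)
    case 0 then show ?case using p0 p1 by simp
  next
    case (Suc k)
    then have h: "?P k" "?P (Suc k)" by auto
    have "wlow r y z a b f (f + Suc (Suc m)) (Suc (Suc k)) = beta_c r y z a * wlow r y z a b f (f + Suc (Suc m)) (Suc k) - x_c r y z a * wlow r y z a b f (f + Suc (Suc m)) k"
      by (simp only: wlow.simps(3))
    also have "\<dots> = beta_c r y z b * wlow r y z a b f (f + Suc m) (Suc (Suc k)) - x_c r y z b * wlow r y z a b f (f+m) (Suc (Suc k))"
      unfolding h wlow.simps(3) by (simp add: algebra_simps)
    finally show ?case using h by simp
  qed
  then show ?thesis by simp
qed


lemma id2: "(W1::real) * ((1-b)/(1-a)*Q2 + (b-a)/(1-a)*Q1) - Q1 * (((1-b)*W2 + (b-a)*W1)/(1-a)) = (1-b)/(1-a)*(W1*Q2 - Q1*W2)"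
  by (simp add: divide_inverse algebra_simps)

lemma id3: "(Wf::real)*(B*Qf - X*Qm) - Qf*(B*Wf - X*Wm) = X*(Wm*Qf - Qm*Wf)"
  by (simp add: algebra_simps)

theorem lemma4:
  fixes r y z a b :: real and f :: nat
  assumes "0 < a" "a < 1" "0 < b" "b < 1" "f \<ge> 3"
    and "z \<noteq> 0" "tau_c r y z a \<noteq> 0" "tau_c r y z b \<noteq> 0"
  shows "(\<forall>n\<ge>1. brstar r y z a n = a^2 * z^2 * (x_c r y z a)^(n-1))
    \<and> brbar r y z a b f (f-1) = (1-b)/(1-a) * brstar r y z a (f-1)
    \<and> brbar r y z a b f (f-1) = (1-b)/(1-a) * a^2 * z^2 * (x_c r y z a)^(f-2)
    \<and> (\<forall>j\<ge>1. brbar r y z a b f (f+j-1)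
          = (1-b)/(1-a) * a^2 * z^2 * (x_c r y z a)^(f-2) * xab r y z a b * (x_c r y z b)^(j-1))"
proof -
  note as = assms
  have xa: "x_c r y z a \<noteq> 0" using assms by (simp add: x_c_def)
  have xb: "x_c r y z b \<noteq> 0" using assms by (simp add: x_c_def)
  have a1: "a \<noteq> 1" "b \<noteq> 1" using assms by auto
  have P1: "\<forall>n\<ge>1. brstar r y z a n = a^2 * z^2 * (x_c r y z a)^(n-1)"
    using brstar_pow[OF xa assms(7)] by auto
  have wm: "wbar r y z a b f (f-1) 0 = wstar r y z a (f-1)"
    using assms(5) by (simp add: wbar_def)
  have wn: "wbar r y z a b f n 0 = wlow r y z a b f n (f-2)" if "n \<ge> f" for n
    unfolding wbar_def using assms(5) that by (auto simp del: wlow.simps)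
  have qm: "qbar r y z a b f (f-1) = qhigh r y z a b f 0"
    using assms(5) by (simp add: qbar_def)
  have qf: "qbar r y z a b f f = qhigh r y z a b f 1"
    by (simp add: qbar_def)
  have qn: "qbar r y z a b f (f+m) = qhigh r y z a b f (Suc m)" for m
    by (simp add: qbar_def)
  have fs: "Suc (Suc (f-2)) = f" "Suc (f-2) = f-1" "f - 1 + 1 = f" "Suc (f - 1) = f" using assms(5) by auto
  have wf: "wbar r y z a b f f 0 = ((1-b)*wstar r y z a f + (b-a)*wstar r y z a (f-1))/(1-a)"
    using wn[of f] wlow_f[OF a1 xa xb, of f "f-2"] fs by simp
  have B2: "brbar r y z a b f (f-1) = (1-b)/(1-a) * brstar r y z a (f-1)"
  proof -
    have "brbar r y z a b f (f-1) = wbar r y z a b f (f-1) 0 * qbar r y z a b f f - qbar r y z a b f (f-1) * wbar r y z a b f f 0"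
      unfolding brbar_def fs ..
    also have "\<dots> = (1-b)/(1-a) * brstar r y z a (f-1)"
      unfolding wm wf qf qm brstar_def fs qhigh.simps One_nat_def[symmetric]
      using assms(5) by (simp add: divide_inverse algebra_simps)
    finally show ?thesis .
  qed
  have B3: "brbar r y z a b f (f-1) = (1-b)/(1-a) * a^2 * z^2 * (x_c r y z a)^(f-2)"
    unfolding B2 using P1 assms(5) by (simp add: algebra_simps numeral_2_eq_2)
  have wf1: "wbar r y z a b f (Suc f) 0 = betaab r y z a b * wbar r y z a b f f 0 - xab r y z a b * wbar r y z a b f (f-1) 0"
    using wn[of "Suc f"] wn[of f] wm wlow_f1[OF a1 xa xb, of f "f-2"] fs by simp
  have qf1: "qbar r y z a b f (Suc f) = betaab r y z a b * qbar r y z a b f f - xab r y z a b * qbar r y z a b f (f-1)"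
    using qn[of 1] qf qm by (simp add: numeral_2_eq_2)
  have Bf: "brbar r y z a b f f = xab r y z a b * brbar r y z a b f (f-1)"
    unfolding brbar_def Suc_eq_plus1[symmetric] fs(4) wf1 qf1 by (rule id3)
  have Bstep: "brbar r y z a b f (f + Suc m) = x_c r y z b * brbar r y z a b f (f+m)" for m
  proof -
    have w: "wbar r y z a b f (f + Suc (Suc m)) 0 = beta_c r y z b * wbar r y z a b f (f + Suc m) 0 - x_c r y z b * wbar r y z a b f (f+m) 0"
      using wn wlow_recn by simp
    have q: "qbar r y z a b f (f + Suc (Suc m)) = beta_c r y z b * qbar r y z a b f (f + Suc m) - x_c r y z b * qbar r y z a b f (f+m)"
      unfolding qn by simp
    show ?thesis unfolding brbar_def Suc_eq_plus1[symmetric] add_Suc_right[symmetric] w q by (rule id3)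
  qed
  have Bm: "brbar r y z a b f (f+m) = xab r y z a b * brbar r y z a b f (f-1) * (x_c r y z b)^m" for m
  proof (induction m)
    case 0 then show ?case using Bf by simp
  next
    case (Suc m) then show ?case using Bstep[of m] by (simp add: algebra_simps)
  qed
  have P4: "\<forall>j\<ge>1. brbar r y z a b f (f+j-1)
          = (1-b)/(1-a) * a^2 * z^2 * (x_c r y z a)^(f-2) * xab r y z a b * (x_c r y z b)^(j-1)"
  proof (intro allI impI)
    fix j :: nat assume "j \<ge> 1"
    then have "f + j - 1 = f + (j-1)" by simp
    then show "brbar r y z a b f (f+j-1)
          = (1-b)/(1-a) * a^2 * z^2 * (x_c r y z a)^(f-2) * xab r y z a b * (x_c r y z b)^(j-1)"
      using Bm[of "j-1"] B3 by (simp add: algebra_simps)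
  qed
  show ?thesis using P1 B2 B3 P4 by blast
qed

end
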